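(* Let $m,N\in\mathbb{N}$ with $N$ square-free and $\gcd(m,N)=1$. Then there exists an integer $1\leq n\leq 2N$ with $n\neq m$ and $\gcd(n,N)=1$ such that $$\left|K(m,n,N)\right|\geq \frac{\sqrt{N}}{2^{\frac12\omega(N)+1}}.$$
   Context: For integers $a,b$ and $c\ge1$, the Kloosterman sum is $K(a,b,c)=\sum_{1\le x\le c,\ \gcd(x,c)=1} e\!\left(\frac{ax+b\overline{x}}{c}\right)$, where $\overline{x}$ is the inverse of $x$ modulo $c$ and $e(z)=e^{2\pi i z}$. $\omega(N)$ denotes the number of distinct prime factors of $N$. *)

theory Defs
  imports "HOL-Analysis.Analysis" "HOL-Number_Theory.Number_Theory" "HOL-Computational_Algebra.Squarefree"
begin

definition ee :: "real \<Rightarrow> complex" where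
  "ee z = exp (2 * of_real pi * \<i> * of_real z)"

definition modinv :: "int \<Rightarrow> int \<Rightarrow> int" where
  "modinv x c = (SOME y. 0 \<le> y \<and> y < c \<and> [x * y = 1] (mod c))"

definition kloosterman :: "int \<Rightarrow> int \<Rightarrow> int \<Rightarrow> complex" where
  "kloosterman a b c =
     (\<Sum>x\<in>{x. 1 \<le> x \<and> x \<le> c \<and> coprime x c}.
        ee (real_of_int (a * x + b * modinv x c) / real_of_int c))"

definition omega :: "nat \<Rightarrow> nat" where
  "omega n = card (prime_factors n)"

end

theory Submission
  imports Defs
begin

lemma ee_add: "ee (a + b) = ee a * ee b"
  unfolding ee_def by (simp add: distrib_left distrib_right exp_add)

lemma ee_int: "ee (of_int k) = 1"
proof -
  have "2 * complex_of_real pi * \<i> * complex_of_real (of_int k) = \<i> * (complex_of_int k * (complex_of_real pi * 2))"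
    by simp
  then show ?thesis unfolding ee_def using exp_2pi_1_int by metis
qed

lemma ee_shift_int: "ee (a + of_int k) = ee a"
  by (simp add: ee_add ee_int)

lemma norm_ee: "cmod (ee z) = 1"
proof -
  have "2 * complex_of_real pi * \<i> * complex_of_real z = \<i> * complex_of_real (2 * pi * z)"
    by simp
  then show ?thesis unfolding ee_def by (metis norm_exp_i_times)
qed

lemma ee_cnj: "cnj (ee z) = ee (- z)"
  unfolding ee_def by (simp add: exp_cnj)

lemma ee_pow: "ee z ^ k = ee (real k * z)"
proof -
  have "ee (real k * z) = exp (of_nat k * (2 * complex_of_real pi * \<i> * complex_of_real z))"
    unfolding ee_def by (simp add: mult_ac)
  then show ?thesis unfolding ee_def by (simp add: exp_of_nat_mult)
qed

lemma ee_eq_1: "ee z = 1 \<longleftrightarrow> z \<in> \<int>"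
proof
  assume "z \<in> \<int>" then show "ee z = 1" by (metis Ints_cases ee_int)
next
  assume "ee z = 1"
  then obtain n where "Im (2 * complex_of_real pi * \<i> * complex_of_real z) = real_of_int (2 * n) * pi"
    unfolding ee_def exp_eq_1 by blast
  then have "2 * pi * z = 2 * real_of_int n * pi" by simp
  then have "z = of_int n" using pi_gt_zero by (simp add: field_simps)
  then show "z \<in> \<int>" by simp
qed

lemma ee_orth:
  fixes M :: nat and d :: int
  assumes "M > 0"
  shows "(\<Sum>k<M. ee (real k * of_int d / real M)) = (if int M dvd d then of_nat M else 0)"
proof (cases "int M dvd d")
  case True
  then obtain q where q: "d = int M * q" by blast
  have "ee (real k * of_int d / real M) = 1" for k
  proof -
    have "real k * of_int d / real M = of_int (int k * q)" using assms q by simp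
    then show ?thesis by (metis ee_int)
  qed
  then show ?thesis using True by simp
next
  case False
  define w where "w = ee (of_int d / real M)"
  have w1: "w \<noteq> 1"
  proof
    assume "w = 1"
    then have "of_int d / real M \<in> \<int>" unfolding w_def ee_eq_1 .
    then obtain q where "of_int d / real M = of_int q" by (metis Ints_cases)
    then have "of_int d = real_of_int (int M * q)" using assms by (simp add: field_simps)
    then have "d = int M * q" by linarith
    then show False using False by simp
  qed
  have wM: "w ^ M = 1"
    unfolding w_def ee_pow using assms by (simp add: ee_int)
  have "(\<Sum>k<M. ee (real k * of_int d / real M)) = (\<Sum>k<M. w ^ k)"
    unfolding w_def ee_pow by simp
  also have "\<dots> = 0" using w1 wM by (simp add: geometric_sum)
  finally show ?thesis using False by simp
qed
lemma parseval:
  fixes M :: nat and I :: "'a set" and a :: "'a \<Rightarrow> complex" and u :: "'a \<Rightarrow> int"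
  assumes M: "M > 0" and fin: "finite I"
    and inj: "\<And>i j. i \<in> I \<Longrightarrow> j \<in> I \<Longrightarrow> [u i = u j] (mod int M) \<Longrightarrow> i = j"
  shows "(\<Sum>k<M. (cmod (\<Sum>i\<in>I. a i * ee (real k * of_int (u i) / real M)))^2)
         = real M * (\<Sum>i\<in>I. (cmod (a i))^2)"
proof -
  have "complex_of_real (\<Sum>k<M. (cmod (\<Sum>i\<in>I. a i * ee (real k * of_int (u i) / real M)))^2)
     = (\<Sum>k<M. (\<Sum>i\<in>I. a i * ee (real k * of_int (u i) / real M)) * cnj (\<Sum>j\<in>I. a j * ee (real k * of_int (u j) / real M)))"
    by (simp only: of_real_sum complex_norm_square)
  also have "\<dots> = (\<Sum>k<M. \<Sum>i\<in>I. \<Sum>j\<in>I. a i * cnj (a j) * ee (real k * of_int (u i - u j) / real M))"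
  proof (rule sum.cong[OF refl])
    fix k
    have e: "ee (real k * of_int (u i) / real M) * cnj (ee (real k * of_int (u j) / real M))
           = ee (real k * of_int (u i - u j) / real M)" for i j
      by (simp add: ee_cnj ee_add[symmetric] diff_divide_distrib right_diff_distrib)
    show "(\<Sum>i\<in>I. a i * ee (real k * of_int (u i) / real M)) * cnj (\<Sum>j\<in>I. a j * ee (real k * of_int (u j) / real M))
       = (\<Sum>i\<in>I. \<Sum>j\<in>I. a i * cnj (a j) * ee (real k * of_int (u i - u j) / real M))"
    proof -
      have "(\<Sum>i\<in>I. a i * ee (real k * of_int (u i) / real M)) * cnj (\<Sum>j\<in>I. a j * ee (real k * of_int (u j) / real M))
        = (\<Sum>i\<in>I. \<Sum>j\<in>I. (a i * ee (real k * of_int (u i) / real M)) * cnj (a j * ee (real k * of_int (u j) / real M)))"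
        by (simp only: cnj_sum sum_product)
      also have "\<dots> = (\<Sum>i\<in>I. \<Sum>j\<in>I. a i * cnj (a j) * ee (real k * of_int (u i - u j) / real M))"
        by (intro sum.cong refl) (simp only: e[symmetric] complex_cnj_mult mult_ac)
      finally show ?thesis .
    qed
  qed
  also have "\<dots> = (\<Sum>i\<in>I. \<Sum>j\<in>I. a i * cnj (a j) * (\<Sum>k<M. ee (real k * of_int (u i - u j) / real M)))"
    by (simp add: sum_distrib_left sum.swap[of _ "{..<M}"] sum.swap[of _ "{..<M}" I])
  also have "\<dots> = (\<Sum>i\<in>I. \<Sum>j\<in>I. if j = i then a i * cnj (a i) * of_nat M else 0)"
  proof (intro sum.cong refl)
    fix i j assume ij: "i \<in> I" "j \<in> I"
    have "int M dvd (u i - u j) \<longleftrightarrow> j = i"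
      using inj[OF ij] by (auto simp: cong_iff_dvd_diff)
    then show "a i * cnj (a j) * (\<Sum>k<M. ee (real k * of_int (u i - u j) / real M)) = (if j = i then a i * cnj (a i) * of_nat M else 0)"
      using ee_orth[OF M, of "u i - u j"] by (simp only:) simp
  qed
  also have "\<dots> = (\<Sum>i\<in>I. a i * cnj (a i) * of_nat M)"
    using fin by (simp add: sum.delta)
  also have "\<dots> = complex_of_real (real M * (\<Sum>i\<in>I. (cmod (a i))^2))"
    by (simp only: of_real_sum of_real_mult complex_norm_square sum_distrib_left of_real_of_nat_eq mult_ac)
  finally show ?thesis by (simp only: of_real_eq_iff)
qed
definition UU :: "int \<Rightarrow> int set" where
  "UU c = {x. 0 \<le> x \<and> x < c \<and> coprime x c}"

lemma finite_UU: "finite (UU c)"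
  unfolding UU_def by (rule finite_subset[of _ "{0..<c}"]) auto

lemma modinv_props:
  assumes "coprime x c" "c > 0"
  shows "0 \<le> modinv x c \<and> modinv x c < c \<and> [x * modinv x c = 1] (mod c)"
proof -
  have "\<exists>y. 0 \<le> y \<and> y < c \<and> [x * y = 1] (mod c)"
    using coprime_iff_invertible'_int[of c x] assms by auto
  then show ?thesis unfolding modinv_def by (rule someI_ex)
qed

lemma kl_alt:
  assumes "c \<ge> 2"
  shows "kloosterman a b c = (\<Sum>x\<in>UU c. ee (of_int a * of_int x / of_int c) * ee (of_int b * of_int (modinv x c) / of_int c))"
proof -
  have "{x. 1 \<le> x \<and> x \<le> c \<and> coprime x c} = UU c"
  proof -
    have "\<not> coprime c c" using assms by auto
    moreover have "\<not> coprime 0 c" using assms by auto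
    ultimately show ?thesis unfolding UU_def
      by (auto, metis dual_order.order_iff_strict, metis less_le_not_le not_less_iff_gr_or_eq zero_less_iff_neq_zero int_one_le_iff_zero_less)
  qed
  then show ?thesis unfolding kloosterman_def
    by (simp add: ee_add[symmetric] add_divide_distrib)
qed

lemma inv_cong_aux:
  fixes x y X Y d :: int
  assumes "[x * X = 1] (mod d)" "[y * Y = 1] (mod d)" "[X = Y] (mod d)"
  shows "[x = y] (mod d)"
proof -
  have "d dvd x * X - 1" "d dvd y * Y - 1" "d dvd Y - X"
    using assms by (auto simp: cong_iff_dvd_diff cong_sym_eq dvd_diff_commute)
  then have "d dvd (- x) * (y * Y - 1) + y * (x * X - 1) + x * y * (Y - X)"
    by (intro dvd_add dvd_mult) auto
  moreover have "(- x) * (y * Y - 1) + y * (x * X - 1) + x * y * (Y - X) = x - y"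
    by (simp add: algebra_simps)
  ultimately show ?thesis by (simp add: cong_iff_dvd_diff)
qed

lemma inv_cong:
  assumes "x \<in> UU c" "y \<in> UU c" "d dvd c"
  shows "[modinv x c = modinv y c] (mod d) \<longleftrightarrow> [x = y] (mod d)"
proof -
  have c: "c > 0" using assms(1) unfolding UU_def by auto
  have hx: "[x * modinv x c = 1] (mod d)" and hy: "[y * modinv y c = 1] (mod d)"
    using modinv_props[of x c] modinv_props[of y c] assms c unfolding UU_def
    by (auto intro: cong_dvd_modulus)
  show ?thesis
  proof
    assume "[modinv x c = modinv y c] (mod d)"
    then show "[x = y] (mod d)" using inv_cong_aux[OF hx hy] by blast
  next
    assume "[x = y] (mod d)"
    then show "[modinv x c = modinv y c] (mod d)"
      using inv_cong_aux[of "modinv x c" x d "modinv y c" y] hx hy by (simp add: mult.commute)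
  qed
qed

lemma ee_cong:
  fixes M :: nat
  assumes "[A = B] (mod int M)" "M > 0"
  shows "ee (real k * of_int A / real M) = ee (real k * of_int B / real M)"
proof -
  obtain q where q: "A = B + int M * q"
    using assms(1) by (metis cong_iff_lin cong_sym_eq)
  have "real k * of_int A / real M = real k * of_int B / real M + of_int (int k * q)"
    using assms(2) q by (simp add: field_simps)
  then show ?thesis by (metis ee_shift_int)
qed

lemma full_moment:
  fixes N :: nat and m :: int
  assumes N: "N \<ge> 2"
  shows "(\<Sum>k<N. (cmod (kloosterman m (int k) (int N)))^2) = real N * card (UU (int N))"
proof -
  have "(\<Sum>k<N. (cmod (kloosterman m (int k) (int N)))^2)
     = (\<Sum>k<N. (cmod (\<Sum>x\<in>UU (int N). ee (of_int m * of_int x / of_int (int N)) * ee (real k * of_int (modinv x (int N)) / real N)))^2)"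
    using N by (simp add: kl_alt)
  also have "\<dots> = real N * (\<Sum>x\<in>UU (int N). (cmod (ee (of_int m * of_int x / of_int (int N))))^2)"
  proof (rule parseval)
    show "0 < N" using N by simp
    show "finite (UU (int N))" by (rule finite_UU)
    fix i j assume ij: "i \<in> UU (int N)" "j \<in> UU (int N)" "[modinv i (int N) = modinv j (int N)] (mod int N)"
    then have "[i = j] (mod int N)" using inv_cong[OF ij(1,2), of "int N"] by simp
    then show "i = j" using ij(1,2) unfolding UU_def by (auto intro: cong_less_imp_eq_int)
  qed
  also have "\<dots> = real N * card (UU (int N))" by (simp add: norm_ee)
  finally show ?thesis .
qed
lemma prime_coprime_int_iff:
  fixes p :: nat and x :: int
  assumes "prime p"
  shows "coprime x (int p) \<longleftrightarrow> \<not> int p dvd x"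
  by (metis assms residues_prime.p_coprime_right_int residues_prime.intro)

lemma fiber_eq:
  fixes p M :: nat and r :: int
  assumes M: "M > 0" and r: "0 \<le> r" "r < int M"
  shows "{x. 0 \<le> x \<and> x < int (p * M) \<and> x mod int M = r} = (\<lambda>t. r + int M * int t) ` {..<p}"
proof (intro equalityI subsetI)
  fix x assume x: "x \<in> {x. 0 \<le> x \<and> x < int (p * M) \<and> x mod int M = r}"
  have xm: "x mod int M = r" using x by simp
  have "x = int M * (x div int M) + x mod int M" by simp
  then have "x = r + int M * (x div int M)" using xm by linarith
  moreover have "0 \<le> x div int M" using x M by (simp add: pos_imp_zdiv_nonneg_iff)
  moreover have "x div int M < int p"
  proof -
    have "int M * (x div int M) \<le> x" using \<open>x = r + int M * (x div int M)\<close> r by linarith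
    also have "x < int M * int p" using x by (simp add: mult.commute)
    finally show ?thesis using M by (simp add: mult_less_cancel_left_pos)
  qed
  ultimately show "x \<in> (\<lambda>t. r + int M * int t) ` {..<p}"
    by (intro image_eqI[of _ _ "nat (x div int M)"]) auto
next
  fix x assume "x \<in> (\<lambda>t. r + int M * int t) ` {..<p}"
  then obtain t where t: "t < p" "x = r + int M * int t" by auto
  have "int M * (int t + 1) \<le> int M * int p"
    using t(1) by (intro mult_left_mono) auto
  then have "int M * int t + int M \<le> int M * int p" by (simp add: algebra_simps)
  then show "x \<in> {x. 0 \<le> x \<and> x < int (p * M) \<and> x mod int M = r}"
    using t r M by (auto simp: mult.commute)
qed

lemma fiber_inj:
  fixes p M :: nat and r :: int
  assumes M: "M > 0"
  shows "inj_on (\<lambda>t. r + int M * int t) {..<p}"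
  using M by (auto simp: inj_on_def)

lemma fiber_card:
  fixes p M :: nat and r :: int
  assumes M: "M > 0" and r: "0 \<le> r" "r < int M"
  shows "card {x. 0 \<le> x \<and> x < int (p * M) \<and> x mod int M = r} = p"
  unfolding fiber_eq[OF assms] using card_image[OF fiber_inj[OF M, of r p]] by simp

lemma fiber_sum_zero:
  fixes p M :: nat and m r :: int
  assumes p: "prime p" and M: "M > 0" and pm: "\<not> int p dvd m" and r: "0 \<le> r" "r < int M"
  shows "(\<Sum>x\<in>{x. 0 \<le> x \<and> x < int (p * M) \<and> x mod int M = r}. ee (of_int m * of_int x / real (p * M))) = 0"
proof -
  have p0: "p > 0" using p prime_gt_0_nat by blast
  have eq: "{x. 0 \<le> x \<and> x < int (p * M) \<and> x mod int M = r} = (\<lambda>t. r + int M * int t) ` {..<p}"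
    by (rule fiber_eq[OF M r])
  have inj: "inj_on (\<lambda>t. r + int M * int t) {..<p}"
    using M by (auto simp: inj_on_def)
  have "(\<Sum>x\<in>{x. 0 \<le> x \<and> x < int (p * M) \<and> x mod int M = r}. ee (of_int m * of_int x / real (p * M)))
      = (\<Sum>t<p. ee (of_int m * of_int (r + int M * int t) / real (p * M)))"
    unfolding eq by (simp add: sum.reindex[OF inj])
  also have "\<dots> = (\<Sum>t<p. ee (of_int m * of_int r / real (p * M)) * ee (real t * of_int m / real p))"
  proof (rule sum.cong[OF refl])
    fix t
    have "of_int m * of_int (r + int M * int t) / real (p * M) = of_int m * of_int r / real (p * M) + real t * of_int m / real p"
      using M p0 by (simp add: field_simps)
    then show "ee (of_int m * of_int (r + int M * int t) / real (p * M)) = ee (of_int m * of_int r / real (p * M)) * ee (real t * of_int m / real p)"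
      by (simp add: ee_add)
  qed
  also have "\<dots> = ee (of_int m * of_int r / real (p * M)) * (\<Sum>t<p. ee (real t * of_int m / real p))"
    by (simp add: sum_distrib_left)
  also have "\<dots> = 0" using ee_orth[OF p0, of m] pm by simp
  finally show ?thesis .
qed
lemma partial_moment:
  fixes N p M :: nat and m :: int
  assumes N2: "N \<ge> 2" and p: "prime p" and NpM: "N = p * M"
    and cop: "coprime (int p) (int M)" and pm: "\<not> int p dvd m"
  shows "(\<Sum>k<M. (cmod (kloosterman m (int (p * k)) (int N)))^2) * (real p - 1) \<le> real M * card (UU (int N))"
proof -
  define c where "c = int N"
  define U where "U = UU c"
  have M0: "M > 0" using N2 NpM by (cases M) auto
  have p0: "p > 1" using p prime_gt_1_nat by blast
  have c2: "c \<ge> 2" using N2 c_def by simp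
  have Mc: "int M dvd c" unfolding c_def NpM by simp
  define R where "R = (\<lambda>x. x mod int M) ` U"
  define fib where "fib r = {x\<in>U. x mod int M = r}" for r
  define G where "G r = (\<Sum>x\<in>fib r. ee (of_int m * of_int x / of_int c))" for r
  define rep where "rep r = (SOME x. x \<in> U \<and> x mod int M = r)" for r
  define u where "u r = modinv (rep r) c" for r
  have finU: "finite U" unfolding U_def by (rule finite_UU)
  have finR: "finite R" unfolding R_def using finU by simp
  have rep: "rep r \<in> U \<and> rep r mod int M = r" if "r \<in> R" for r
  proof -
    have "\<exists>x. x \<in> U \<and> x mod int M = r" using that unfolding R_def by auto
    then show ?thesis unfolding rep_def by (rule someI_ex)
  qed
  have K: "kloosterman m (int (p * k)) (int N) = (\<Sum>r\<in>R. G r * ee (real k * of_int (u r) / real M))" for k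
  proof -
    have "kloosterman m (int (p * k)) (int N)
        = (\<Sum>x\<in>U. ee (of_int m * of_int x / of_int c) * ee (of_int (int (p * k)) * of_int (modinv x c) / of_int c))"
      unfolding U_def c_def using c2 c_def by (simp add: kl_alt)
    also have "\<dots> = (\<Sum>x\<in>U. ee (of_int m * of_int x / of_int c) * ee (real k * of_int (u (x mod int M)) / real M))"
    proof (rule sum.cong[OF refl])
      fix x assume x: "x \<in> U"
      have r: "x mod int M \<in> R" unfolding R_def using x by simp
      have "[x = rep (x mod int M)] (mod int M)" using rep[OF r] by (simp add: cong_def)
      then have "[modinv x c = u (x mod int M)] (mod int M)"
        unfolding u_def using inv_cong[of x c "rep (x mod int M)" "int M"] x rep[OF r] Mc U_def by simp
      then have "ee (real k * of_int (modinv x c) / real M) = ee (real k * of_int (u (x mod int M)) / real M)"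
        using ee_cong M0 by blast
      moreover have "of_int (int (p * k)) * of_int (modinv x c) / of_int c = real k * of_int (modinv x c) / real M"
        unfolding c_def NpM using p0 M0 by (simp add: field_simps)
      ultimately show "ee (of_int m * of_int x / of_int c) * ee (of_int (int (p * k)) * of_int (modinv x c) / of_int c)
          = ee (of_int m * of_int x / of_int c) * ee (real k * of_int (u (x mod int M)) / real M)" by simp
    qed
    also have "\<dots> = (\<Sum>r\<in>R. \<Sum>x\<in>fib r. ee (of_int m * of_int x / of_int c) * ee (real k * of_int (u (x mod int M)) / real M))"
      unfolding fib_def by (rule sum.group[OF finU finR, of "\<lambda>x. x mod int M", symmetric]) (auto simp: R_def)
    also have "\<dots> = (\<Sum>r\<in>R. \<Sum>x\<in>fib r. ee (of_int m * of_int x / of_int c) * ee (real k * of_int (u r) / real M))"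
      by (intro sum.cong refl) (simp add: fib_def)
    also have "\<dots> = (\<Sum>r\<in>R. G r * ee (real k * of_int (u r) / real M))"
      unfolding G_def by (simp add: sum_distrib_right)
    finally show ?thesis .
  qed
  have S2: "(\<Sum>k<M. (cmod (kloosterman m (int (p * k)) (int N)))^2) = real M * (\<Sum>r\<in>R. (cmod (G r))^2)"
    unfolding K
  proof (rule parseval[OF M0 finR])
    fix i j assume ij: "i \<in> R" "j \<in> R" "[u i = u j] (mod int M)"
    then have "[rep i = rep j] (mod int M)"
      unfolding u_def using inv_cong[of "rep i" c "rep j" "int M"] rep Mc U_def by simp
    then show "i = j" using rep[OF ij(1)] rep[OF ij(2)] by (simp add: cong_def)
  qed
  have fibfacts: "cmod (G r) \<le> 1 \<and> card (fib r) \<ge> p - 1" if r: "r \<in> R" for r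
  proof -
    define F where "F = {x. 0 \<le> x \<and> x < int (p * M) \<and> x mod int M = r}"
    define B where "B = {x\<in>F. int p dvd x}"
    have r0: "0 \<le> r" "r < int M" using rep[OF r] M0 by (metis of_nat_0_less_iff pos_mod_sign, metis of_nat_0_less_iff pos_mod_bound)
    have copr: "coprime r (int M)"
    proof -
      have "coprime (rep r) c" using rep[OF r] unfolding U_def UU_def by simp
      then have "coprime (rep r) (int M)" unfolding c_def NpM by simp
      then show ?thesis using rep[OF r] M0 coprime_mod_left_iff[of "int M" "rep r"] by simp
    qed
    have finF: "finite F" unfolding F_def by (rule finite_subset[of _ "{0..<int (p*M)}"]) auto
    have BF: "B \<subseteq> F" unfolding B_def by auto
    have fibeq: "fib r = F - B"
    proof -
      have "coprime x c \<longleftrightarrow> \<not> int p dvd x" if "x \<in> F" for x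
      proof -
        have "coprime x (int M)"
          using that copr M0 coprime_mod_left_iff[of "int M" x] unfolding F_def by simp
        then have "coprime x c \<longleftrightarrow> coprime x (int p)" unfolding c_def NpM by simp
        then show ?thesis using prime_coprime_int_iff[OF p] by simp
      qed
      then show ?thesis unfolding fib_def U_def UU_def F_def B_def c_def NpM by auto
    qed
    have cardB: "card B \<le> 1"
    proof -
      have "finite B" using finF BF finite_subset by blast
      moreover have "a1 = a2" if "a1 \<in> B" "a2 \<in> B" for a1 a2
      proof -
        have "[a1 = a2] (mod int M)" using that unfolding B_def F_def by (simp add: cong_def)
        moreover have "[a1 = a2] (mod int p)" using that unfolding B_def
          by (metis (no_types, lifting) cong_def dvd_imp_mod_0 mem_Collect_eq)
        ultimately have "[a1 = a2] (mod int p * int M)" using cop coprime_cong_mult[of a1 a2 "int p" "int M"]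
          by (simp add: ac_simps)
        then show ?thesis using that unfolding B_def F_def by (auto intro: cong_less_imp_eq_int)
      qed
      ultimately show ?thesis using card_le_Suc0_iff_eq[of B] by auto
    qed
    have "G r = (\<Sum>x\<in>F. ee (of_int m * of_int x / of_int c)) - (\<Sum>x\<in>B. ee (of_int m * of_int x / of_int c))"
      unfolding G_def fibeq using sum_diff[OF finF BF] by simp
    also have "(\<Sum>x\<in>F. ee (of_int m * of_int x / of_int c)) = 0"
      unfolding F_def c_def NpM using fiber_sum_zero[OF p M0 pm r0] by simp
    finally have "cmod (G r) = cmod (\<Sum>x\<in>B. ee (of_int m * of_int x / of_int c))" by simp
    also have "\<dots> \<le> (\<Sum>x\<in>B. cmod (ee (of_int m * of_int x / of_int c)))" by (rule norm_sum)
    also have "\<dots> = card B" by (simp add: norm_ee)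
    also have "\<dots> \<le> 1" using cardB by simp
    finally have g: "cmod (G r) \<le> 1" .
    have "card F = p" unfolding F_def by (rule fiber_card[OF M0 r0])
    then have "card (fib r) = p - card B" unfolding fibeq using card_Diff_subset[OF _ BF] finF finite_subset[OF BF] by simp
    then show ?thesis using g cardB by simp
  qed
  have "card U = (\<Sum>r\<in>R. card (fib r))"
    using sum.group[OF finU finR, of "\<lambda>x. x mod int M" "\<lambda>_. 1::nat"] unfolding fib_def R_def by simp
  also have "\<dots> \<ge> (\<Sum>r\<in>R. p - 1)" by (intro sum_mono) (use fibfacts in auto)
  finally have "card R * (p - 1) \<le> card U" by simp
  then have "real (card R * (p - 1)) \<le> real (card U)" by (simp only: of_nat_le_iff)
  then have cardU: "real (card R) * (real p - 1) \<le> real (card U)"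
    using p0 by (simp add: of_nat_diff)
  have "(\<Sum>r\<in>R. (cmod (G r))^2) \<le> (\<Sum>r\<in>R. 1)"
    by (intro sum_mono) (use fibfacts in \<open>auto simp: power_le_one\<close>)
  then have GR: "(\<Sum>r\<in>R. (cmod (G r))^2) \<le> real (card R)" by simp
  have "(\<Sum>k<M. (cmod (kloosterman m (int (p * k)) (int N)))^2) * (real p - 1)
      = real M * ((\<Sum>r\<in>R. (cmod (G r))^2) * (real p - 1))" unfolding S2 by simp
  also have "\<dots> \<le> real M * (real (card R) * (real p - 1))"
    using GR p0 by (intro mult_left_mono mult_right_mono) auto
  also have "\<dots> \<le> real M * card U" using cardU by (intro mult_left_mono) auto
  finally show ?thesis unfolding U_def c_def .
qed
lemma recip_sum_bound:
  fixes P :: "nat set"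
  assumes "finite P" "\<And>p. p \<in> P \<Longrightarrow> p \<ge> 2" "card P = k"
  shows "(\<Sum>p\<in>P. 1 / (real p * (real p - 1))) \<le> 1 - 1 / (real k + 1)"
  using assms
proof (induction k arbitrary: P)
  case 0
  then show ?case by simp
next
  case (Suc k)
  define q where "q = Max P"
  have ne: "P \<noteq> {}" using Suc.prems(3) by auto
  have qP: "q \<in> P" unfolding q_def using Suc.prems(1) ne by simp
  have sub: "P \<subseteq> {2..q}" using Suc.prems(1,2) unfolding q_def by auto
  have "Suc k \<le> card {2..q}" using card_mono[OF _ sub] Suc.prems(3) by simp
  then have qk: "real q \<ge> real k + 2" by simp
  have IH: "(\<Sum>p\<in>P - {q}. 1 / (real p * (real p - 1))) \<le> 1 - 1 / (real k + 1)"
    using Suc.IH[of "P - {q}"] Suc.prems qP by auto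
  have "(\<Sum>p\<in>P. 1 / (real p * (real p - 1))) = 1 / (real q * (real q - 1)) + (\<Sum>p\<in>P - {q}. 1 / (real p * (real p - 1)))"
    using Suc.prems(1) qP by (simp add: sum.remove)
  also have "1 / (real q * (real q - 1)) \<le> 1 / ((real k + 2) * (real k + 1))"
    using qk by (intro divide_left_mono mult_mono) auto
  finally have "(\<Sum>p\<in>P. 1 / (real p * (real p - 1))) \<le> 1 / ((real k + 2) * (real k + 1)) + (1 - 1 / (real k + 1))"
    using IH by linarith
  also have "\<dots> = 1 - 1 / (real (Suc k) + 1)"
  proof -
    have a: "real k + 1 > 0" "real k + 2 > 0" by auto
    have "1 / ((real k + 2) * (real k + 1)) = 1 / (real k + 1) - 1 / (real k + 2)"
      using a by (simp add: field_simps)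
    moreover have "real (Suc k) + 1 = real k + 2" by simp
    ultimately show ?thesis by simp
  qed
  finally show ?case .
qed

lemma exists_good:
  fixes N m :: nat
  assumes N2: "N \<ge> 2" and sf: "squarefree N" and cop: "coprime m N"
  shows "\<exists>n. 1 \<le> n \<and> n < N \<and> coprime n N \<and>
           (cmod (kloosterman (int m) (int n) (int N)))^2 \<ge> real N / (real (omega N) + 1)"
proof -
  define f where "f k = (cmod (kloosterman (int m) (int k) (int N)))^2" for k
  define P where "P = prime_factors N"
  define A where "A = {k. k < N \<and> coprime k N}"
  define B where "B = {k. k < N \<and> \<not> coprime k N}"
  define u where "u = card (UU (int N))"
  have finP: "finite P" unfolding P_def by simp
  have f0: "f k \<ge> 0" for k unfolding f_def by simp
  have AU: "int ` A = UU (int N)"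
  proof -
    have "x \<in> int ` A" if "x \<in> UU (int N)" for x
    proof -
      have x: "0 \<le> x" "x < int N" "coprime x (int N)" using that unfolding UU_def by auto
      have "int (nat x) = x" using x by simp
      then have "coprime (nat x) N" using x(3) coprime_int_iff[of "nat x" N] by simp
      then have "nat x \<in> A" unfolding A_def using x by auto
      then show ?thesis using \<open>int (nat x) = x\<close> by (metis image_eqI)
    qed
    moreover have "int k \<in> UU (int N)" if "k \<in> A" for k
      using that unfolding A_def UU_def by simp
    ultimately show ?thesis by blast
  qed
  have cardA: "card A = u" unfolding u_def AU[symmetric] by (simp add: card_image)
  have u0: "u > 0"
  proof -
    have "1 \<in> A" unfolding A_def using N2 by simp
    moreover have "finite A" unfolding A_def by simp
    ultimately have "card A > 0" using card_gt_0_iff[of A] by blast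
    then show ?thesis using cardA by simp
  qed
  have split: "{..<N} = A \<union> B" "A \<inter> B = {}" unfolding A_def B_def by auto
  have full: "(\<Sum>k<N. f k) = real N * u"
    unfolding f_def u_def using full_moment[OF N2] by simp
  have Bbound: "(\<Sum>k\<in>B. f k) \<le> (\<Sum>p\<in>P. \<Sum>j<N div p. f (p * j))"
  proof -
    have "(\<Sum>k\<in>B. f k) \<le> (\<Sum>k\<in>B. \<Sum>p\<in>P. if p dvd k then f k else 0)"
    proof (rule sum_mono)
      fix k assume k: "k \<in> B"
      then have "\<not> coprime k N" unfolding B_def by simp
      then have "gcd k N \<noteq> 1" by (simp only: coprime_iff_gcd_eq_1) simp
      then obtain p where p: "prime p" "p dvd gcd k N" using prime_factor_nat by blast
      then have pP: "p \<in> P" unfolding P_def using N2 by (auto simp: in_prime_factors_iff)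
      have "f k = (if p dvd k then f k else 0)" using p by simp
      also have "\<dots> \<le> (\<Sum>p\<in>P. if p dvd k then f k else 0)"
        by (rule member_le_sum[OF pP]) (auto simp: f0 finP)
      finally show "f k \<le> (\<Sum>p\<in>P. if p dvd k then f k else 0)" .
    qed
    also have "\<dots> = (\<Sum>p\<in>P. \<Sum>k\<in>B. if p dvd k then f k else 0)" by (rule sum.swap)
    also have "\<dots> \<le> (\<Sum>p\<in>P. \<Sum>k\<in>{k. k < N \<and> p dvd k}. f k)"
    proof (rule sum_mono)
      fix p assume "p \<in> P"
      have "(\<Sum>k\<in>B. if p dvd k then f k else 0) = (\<Sum>k\<in>{k\<in>B. p dvd k}. f k)"
        by (rule sum.inter_filter[symmetric]) (simp add: B_def)
      also have "\<dots> \<le> (\<Sum>k\<in>{k. k < N \<and> p dvd k}. f k)"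
        by (rule sum_mono2) (auto simp: B_def f0)
      finally show "(\<Sum>k\<in>B. if p dvd k then f k else 0) \<le> (\<Sum>k\<in>{k. k < N \<and> p dvd k}. f k)" .
    qed
    also have "\<dots> = (\<Sum>p\<in>P. \<Sum>j<N div p. f (p * j))"
    proof (rule sum.cong[OF refl])
      fix p assume pP: "p \<in> P"
      then have p0: "p > 0" "p dvd N" unfolding P_def using prime_gt_0_nat by (auto simp: in_prime_factors_iff)
      have eq: "{k. k < N \<and> p dvd k} = (\<lambda>j. p * j) ` {..<N div p}"
      proof (intro equalityI subsetI)
        fix k assume "k \<in> {k. k < N \<and> p dvd k}"
        then obtain j where j: "k = p * j" "p * j < N" by auto
        then have "p * j < p * (N div p)" using p0 by simp
        then have "j < N div p" by (simp only: mult_less_cancel1)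
        then show "k \<in> (\<lambda>j. p * j) ` {..<N div p}" using j by auto
      next
        fix k assume "k \<in> (\<lambda>j. p * j) ` {..<N div p}"
        then obtain j where j: "k = p * j" "j < N div p" by auto
        have "p * j < p * (N div p)" using mult_less_mono2[OF j(2) p0(1)] .
        moreover have "p * (N div p) = N" using p0 by simp
        ultimately show "k \<in> {k. k < N \<and> p dvd k}" using j by simp
      qed
      have inj: "inj_on (\<lambda>j. p * j) {..<N div p}" using p0 by (auto simp: inj_on_def)
      show "(\<Sum>k\<in>{k. k < N \<and> p dvd k}. f k) = (\<Sum>j<N div p. f (p * j))"
        unfolding eq by (simp add: sum.reindex[OF inj])
    qed
    finally show ?thesis .
  qed
  have each: "(\<Sum>j<N div p. f (p * j)) \<le> real N * u * (1 / (real p * (real p - 1)))" if pP: "p \<in> P" for p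
  proof -
    have p: "prime p" "p dvd N" using pP N2 unfolding P_def by (auto simp: in_prime_factors_iff)
    define M where "M = N div p"
    have NpM: "N = p * M" unfolding M_def using p by simp
    have p1: "real p > 1" using prime_gt_1_nat[OF p(1)] by simp
    have copM: "coprime (int p) (int M)"
    proof -
      have "\<not> p dvd M"
      proof
        assume "p dvd M"
        then have "p^2 dvd N" unfolding NpM by (simp add: power2_eq_square)
        then show False using sf p(1) squarefreeD[of N p] by auto
      qed
      then show ?thesis using prime_imp_coprime_nat[OF p(1)] by simp
    qed
    have pm: "\<not> int p dvd int m"
    proof
      assume "int p dvd int m"
      then have "p dvd m" by simp
      then show False using cop p by (metis coprime_common_divisor not_prime_unit)
    qed
    have "(\<Sum>j<N div p. f (p * j)) * (real p - 1) \<le> real M * u"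
      using partial_moment[OF N2 p(1) NpM copM pm] unfolding f_def u_def M_def by simp
    then have "(\<Sum>j<N div p. f (p * j)) \<le> real M * u / (real p - 1)"
      using p1 by (simp add: field_simps)
    also have "real M = real N / real p" unfolding NpM using p1 by simp
    finally show ?thesis using p1 by (simp add: field_simps)
  qed
  have "(\<Sum>k\<in>B. f k) \<le> (\<Sum>p\<in>P. real N * u * (1 / (real p * (real p - 1))))"
  proof -
    have "(\<Sum>p\<in>P. \<Sum>j<N div p. f (p * j)) \<le> (\<Sum>p\<in>P. real N * u * (1 / (real p * (real p - 1))))"
      by (rule sum_mono) (rule each)
    then show ?thesis using Bbound by linarith
  qed
  also have "\<dots> = real N * u * (\<Sum>p\<in>P. 1 / (real p * (real p - 1)))" by (simp add: sum_distrib_left)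
  also have "\<dots> \<le> real N * u * (1 - 1 / (real (omega N) + 1))"
  proof (rule mult_left_mono)
    show "(\<Sum>p\<in>P. 1 / (real p * (real p - 1))) \<le> 1 - 1 / (real (omega N) + 1)"
      by (rule recip_sum_bound[OF finP]) (auto simp: P_def omega_def in_prime_factors_iff prime_ge_2_nat)
  qed simp
  finally have Bb: "(\<Sum>k\<in>B. f k) \<le> real N * u * (1 - 1 / (real (omega N) + 1))" .
  have "(\<Sum>k<N. f k) = (\<Sum>k\<in>A. f k) + (\<Sum>k\<in>B. f k)"
    unfolding split(1) by (rule sum.union_disjoint) (auto simp: A_def B_def)
  then have SA: "(\<Sum>k\<in>A. f k) \<ge> real N * u / (real (omega N) + 1)"
    using full Bb by (simp add: field_simps)
  show ?thesis
  proof (rule ccontr)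
    assume neg: "\<not> ?thesis"
    have lt: "f k < real N / (real (omega N) + 1)" if "k \<in> A" for k
    proof -
      from that have k: "k < N" "coprime k N" by (auto simp: A_def)
      have "k \<noteq> 0"
      proof
        assume "k = 0"
        then have "N = 1" using k(2) by simp
        then show False using N2 by simp
      qed
      then show ?thesis using neg k unfolding f_def by (auto simp: not_le)
    qed
    have "(\<Sum>k\<in>A. f k) < (\<Sum>k\<in>A. real N / (real (omega N) + 1))"
    proof -
      have finA: "finite A" unfolding A_def by simp
      have Ane: "A \<noteq> {}" using u0 cardA by auto
      show ?thesis by (rule sum_strict_mono[OF finA Ane]) (rule lt)
    qed
    also have "\<dots> = real N * u / (real (omega N) + 1)" using cardA by simp
    finally show False using SA by simp
  qed
qed
lemma kl_period:
  assumes "c > 0"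
  shows "kloosterman a (b + c) c = kloosterman a b c"
  unfolding kloosterman_def
proof (rule sum.cong[OF refl])
  fix x
  have "real_of_int (a * x + (b + c) * modinv x c) / real_of_int c
      = real_of_int (a * x + b * modinv x c) / real_of_int c + real_of_int (modinv x c)"
    using assms by (simp add: field_simps)
  then show "ee (real_of_int (a * x + (b + c) * modinv x c) / real_of_int c) = ee (real_of_int (a * x + b * modinv x c) / real_of_int c)"
    by (simp add: ee_shift_int)
qed

lemma kl_one: "kloosterman a b 1 = 1"
proof -
  have "{x::int. 1 \<le> x \<and> x \<le> 1 \<and> coprime x 1} = {1}" by auto
  then show ?thesis unfolding kloosterman_def
    using ee_int[of "a + b * modinv 1 1"] by simp
qed

lemma powr_sq: "(2 powr (real k / 2 + 1))^2 = (2::real) ^ (k + 2)"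
proof -
  have e: "(real k / 2 + 1) + (real k / 2 + 1) = real (k + 2)" by simp
  have "(2 powr (real k / 2 + 1))^2 = 2 powr (real k / 2 + 1) * 2 powr (real k / 2 + 1)"
    by (simp add: power2_eq_square)
  also have "\<dots> = 2 powr ((real k / 2 + 1) + (real k / 2 + 1))" by (simp only: powr_add)
  also have "\<dots> = 2 powr real (k + 2)" by (simp only: e)
  also have "\<dots> = 2 ^ (k + 2)" by (rule powr_realpow) simp
  finally show ?thesis .
qed

theorem lemma3:
  fixes m N :: nat
  assumes "N \<ge> 1" and "squarefree N" and "coprime m N"
  shows "\<exists>n::nat. 1 \<le> n \<and> n \<le> 2 * N \<and> n \<noteq> m \<and> coprime n N \<and>
           cmod (kloosterman (int m) (int n) (int N))
             \<ge> sqrt (real N) / 2 powr (real (omega N) / 2 + 1)"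
proof (cases "N = 1")
  case True
  have om: "omega N = 0" unfolding omega_def True by simp
  have b: "sqrt (real N) / 2 powr (real (omega N) / 2 + 1) \<le> 1"
    unfolding om by (simp add: True)
  define n where "n = (if m = 1 then 2 else (1::nat))"
  show ?thesis
    by (rule exI[of _ n]) (use b True in \<open>auto simp: n_def kl_one\<close>)
next
  case False
  then have N2: "N \<ge> 2" using assms(1) by simp
  obtain n0 where n0: "1 \<le> n0" "n0 < N" "coprime n0 N"
    and K: "(cmod (kloosterman (int m) (int n0) (int N)))^2 \<ge> real N / (real (omega N) + 1)"
    using exists_good[OF N2 assms(2,3)] by blast
  define t where "t = 2 powr (real (omega N) / 2 + 1)"
  have t0: "t > 0" unfolding t_def by simp
  have tsq: "t^2 = 2 ^ (omega N + 2)" unfolding t_def by (rule powr_sq)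
  have "real (omega N) + 1 \<le> 2 ^ (omega N + 2)"
  proof -
    have "omega N + 1 < 2 ^ (omega N + 1)" by (rule less_exp)
    also have "\<dots> \<le> 2 ^ (omega N + 2)" by (intro power_increasing) auto
    finally have "omega N + 1 \<le> (2::nat) ^ (omega N + 2)" by simp
    then show ?thesis by (metis of_nat_1 of_nat_add of_nat_le_iff of_nat_numeral of_nat_power)
  qed
  then have "(sqrt (real N) / t)^2 \<le> real N / (real (omega N) + 1)"
  proof -
    have "(sqrt (real N) / t)^2 = real N / 2 ^ (omega N + 2)"
      unfolding power_divide tsq by simp
    also have "\<dots> \<le> real N / (real (omega N) + 1)"
      using \<open>real (omega N) + 1 \<le> 2 ^ (omega N + 2)\<close> by (intro divide_left_mono) auto
    finally show ?thesis .
  qed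
  also have "\<dots> \<le> (cmod (kloosterman (int m) (int n0) (int N)))^2" by (rule K)
  finally have bound: "sqrt (real N) / t \<le> cmod (kloosterman (int m) (int n0) (int N))"
    by (rule power2_le_imp_le) simp
  show ?thesis
  proof (cases "n0 = m")
    case False
    show ?thesis
      by (rule exI[of _ n0]) (use n0 False bound t_def in auto)
  next
    case True
    have "kloosterman (int m) (int (n0 + N)) (int N) = kloosterman (int m) (int n0) (int N)"
      using kl_period[of "int N" "int m" "int n0"] N2 by simp
    moreover have "coprime (n0 + N) N"
    proof -
      have "gcd (n0 + N) N = gcd n0 N" by simp
      then show ?thesis using n0(3) by (metis coprime_iff_gcd_eq_1)
    qed
    ultimately show ?thesis
      by (intro exI[of _ "n0 + N"]) (use n0 True bound t_def in auto)
  qed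
qed

end
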